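(* Let $G$ be a threshold graph and let $\lambda\neq 0$ be a real number. Then there exists a matrix $M\in S(G)$ such that $\mathrm{DSpec}(M)\subseteq\{-\lambda,0,\lambda,2\lambda\}$. In particular, $q(G)\le 4$.
   Context: A threshold graph is a (simple, not necessarily connected) graph obtained from a single vertex by repeatedly adding either a new isolated vertex or a new dominating vertex (a vertex adjacent to all previously added vertices). For a simple graph $G$ on vertices $v_1,\dots,v_n$, $S(G)$ denotes the set of all real symmetric $n\times n$ matrices $A=(a_{ij})$ such that for all $i\neq j$, $a_{ij}\neq 0$ if and only if $\{v_i,v_j\}$ is an edge of $G$ (diagonal entries are arbitrary). For a square matrix $A$, $\mathrm{DSpec}(A)$ is the set of distinct eigenvalues of $A$, and $q(G)=\min\{|\mathrm{DSpec}(A)| : A\in S(G)\}$. *)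

theory Defs
  imports Complex_Main
begin

text \<open>A graph is given by a vertex set V and an edge relation E (only pairs of
distinct vertices of V matter).\<close>
inductive threshold_graph :: "'a set \<Rightarrow> ('a \<Rightarrow> 'a \<Rightarrow> bool) \<Rightarrow> bool" where
  single: "threshold_graph {v} E"
| add_isolated: "\<lbrakk>threshold_graph V E; v \<notin> V; \<forall>u\<in>V. \<not> E v u \<and> \<not> E u v\<rbrakk>
     \<Longrightarrow> threshold_graph (insert v V) E"
| add_dominating: "\<lbrakk>threshold_graph V E; v \<notin> V; \<forall>u\<in>V. E v u \<and> E u v\<rbrakk>
     \<Longrightarrow> threshold_graph (insert v V) E"

text \<open>Matrices indexed by the vertex set V (entries outside V are irrelevant).
S(G): real symmetric matrices whose off-diagonal nonzero pattern is the edge set.\<close>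
definition in_S :: "'a set \<Rightarrow> ('a \<Rightarrow> 'a \<Rightarrow> bool) \<Rightarrow> ('a \<Rightarrow> 'a \<Rightarrow> real) \<Rightarrow> bool" where
  "in_S V E A \<longleftrightarrow> (\<forall>i\<in>V. \<forall>j\<in>V. A i j = A j i) \<and>
     (\<forall>i\<in>V. \<forall>j\<in>V. i \<noteq> j \<longrightarrow> (A i j \<noteq> 0 \<longleftrightarrow> E i j))"

definition is_eigenvalue :: "'a set \<Rightarrow> ('a \<Rightarrow> 'a \<Rightarrow> real) \<Rightarrow> complex \<Rightarrow> bool" where
  "is_eigenvalue V A \<mu> \<longleftrightarrow> (\<exists>x :: 'a \<Rightarrow> complex. (\<exists>i\<in>V. x i \<noteq> 0) \<and>
     (\<forall>i\<in>V. (\<Sum>j\<in>V. complex_of_real (A i j) * x j) = \<mu> * x i))"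

definition DSpec :: "'a set \<Rightarrow> ('a \<Rightarrow> 'a \<Rightarrow> real) \<Rightarrow> complex set" where
  "DSpec V A = {\<mu>. is_eigenvalue V A \<mu>}"

definition q_min :: "'a set \<Rightarrow> ('a \<Rightarrow> 'a \<Rightarrow> bool) \<Rightarrow> nat" where
  "q_min V E = (LEAST k. \<exists>A. in_S V E A \<and> card (DSpec V A) = k)"

end

theory Submission
  imports Defs
begin

lemma single_step:
  shows "\<exists>A x lam. in_S {v} E A \<and> DSpec {v} A \<subseteq> complex_of_real ` {-l,0,l,2*l} \<and>
     (lam = 0 \<or> lam = l) \<and> (\<forall>i\<in>{v}. x i \<noteq> 0) \<and> (\<forall>i\<in>{v}. (\<Sum>j\<in>{v}. A i j * x j) = lam * x i)"
proof (rule exI[of _ "\<lambda>i j. 0"], rule exI[of _ "\<lambda>_. 1"], rule exI[of _ 0], intro conjI)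
  show "in_S {v} E (\<lambda>i j. 0)" by (simp add: in_S_def)
  show "DSpec {v} (\<lambda>i j. 0) \<subseteq> complex_of_real ` {-l,0,l,2*l}"
  proof
    fix \<mu> assume "\<mu> \<in> DSpec {v} (\<lambda>i j. 0)"
    then obtain z where "z v \<noteq> 0" "0 = \<mu> * z v" by (auto simp: DSpec_def is_eigenvalue_def)
    then have "\<mu> = 0" by simp
    then show "\<mu> \<in> complex_of_real ` {-l,0,l,2*l}" by (auto intro: image_eqI[of _ _ 0])
  qed
qed auto

lemma iso_step:
  assumes fin: "finite V" and vV: "v \<notin> V" and A: "in_S V E A"
    and iso: "\<forall>u\<in>V. \<not> E v u \<and> \<not> E u v"
    and spec: "DSpec V A \<subseteq> complex_of_real ` {-l,0,l,2*l}"
    and lam: "lam = 0 \<or> lam = l"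
    and xnz: "\<forall>i\<in>V. x i \<noteq> 0" and eig: "\<forall>i\<in>V. (\<Sum>j\<in>V. A i j * x j) = lam * x i"
  shows "\<exists>A' x'. in_S (insert v V) E A' \<and> DSpec (insert v V) A' \<subseteq> complex_of_real ` {-l,0,l,2*l}
     \<and> (\<forall>i\<in>insert v V. x' i \<noteq> 0) \<and> (\<forall>i\<in>insert v V. (\<Sum>j\<in>insert v V. A' i j * x' j) = lam * x' i)"
proof -
  define A' where "A' = (\<lambda>i j. if i = v \<and> j = v then lam else if i = v \<or> j = v then 0 else A i j)"
  define x' where "x' = x(v := 1)"
  have S1: "in_S (insert v V) E A'"
    using A iso vV unfolding in_S_def A'_def by auto
  have S2: "DSpec (insert v V) A' \<subseteq> complex_of_real ` {-l,0,l,2*l}"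
  proof
    fix \<mu> assume "\<mu> \<in> DSpec (insert v V) A'"
    then obtain z where nz: "\<exists>i\<in>insert v V. z i \<noteq> 0"
      and eq: "\<forall>i\<in>insert v V. (\<Sum>j\<in>insert v V. complex_of_real (A' i j) * z j) = \<mu> * z i"
      by (auto simp: DSpec_def is_eigenvalue_def)
    have rowV: "(\<Sum>j\<in>V. complex_of_real (A i j) * z j) = \<mu> * z i" if "i \<in> V" for i
    proof -
      have "i \<noteq> v" using that vV by auto
      have "(\<Sum>j\<in>insert v V. complex_of_real (A' i j) * z j) = (\<Sum>j\<in>V. complex_of_real (A' i j) * z j)"
        using fin vV \<open>i \<noteq> v\<close> by (simp add: A'_def)
      also have "\<dots> = (\<Sum>j\<in>V. complex_of_real (A i j) * z j)"
        using vV \<open>i \<noteq> v\<close> by (intro sum.cong) (auto simp: A'_def)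
      finally show ?thesis using eq that by auto
    qed
    have rowv: "complex_of_real lam * z v = \<mu> * z v"
    proof -
      have "(\<Sum>j\<in>insert v V. complex_of_real (A' v j) * z j) = complex_of_real lam * z v + (\<Sum>j\<in>V. complex_of_real (A' v j) * z j)"
        using fin vV by (simp add: A'_def)
      also have "(\<Sum>j\<in>V. complex_of_real (A' v j) * z j) = 0"
        using vV by (intro sum.neutral) (auto simp: A'_def)
      finally show ?thesis using eq by auto
    qed
    show "\<mu> \<in> complex_of_real ` {-l,0,l,2*l}"
    proof (cases "\<exists>i\<in>V. z i \<noteq> 0")
      case True
      then have "\<mu> \<in> DSpec V A" using rowV by (auto simp: DSpec_def is_eigenvalue_def)
      then show ?thesis using spec by auto
    next
      case False
      then have "z v \<noteq> 0" using nz by auto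
      then have "\<mu> = complex_of_real lam" using rowv by simp
      then show ?thesis using lam by auto
    qed
  qed
  have S3: "\<forall>i\<in>insert v V. x' i \<noteq> 0" using xnz vV by (auto simp: x'_def)
  have S4: "\<forall>i\<in>insert v V. (\<Sum>j\<in>insert v V. A' i j * x' j) = lam * x' i"
  proof
    fix i assume i: "i \<in> insert v V"
    show "(\<Sum>j\<in>insert v V. A' i j * x' j) = lam * x' i"
    proof (cases "i = v")
      case True
      have "(\<Sum>j\<in>insert v V. A' i j * x' j) = lam * x' v + (\<Sum>j\<in>V. A' i j * x' j)"
        using fin vV True by (simp add: A'_def x'_def)
      also have "(\<Sum>j\<in>V. A' i j * x' j) = 0"
        using vV True by (intro sum.neutral) (auto simp: A'_def)
      finally show ?thesis using True by simp
    next
      case False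
      then have iV: "i \<in> V" using i by auto
      have "(\<Sum>j\<in>insert v V. A' i j * x' j) = (\<Sum>j\<in>V. A' i j * x' j)"
        using fin vV False by (simp add: A'_def)
      also have "\<dots> = (\<Sum>j\<in>V. A i j * x j)"
        using vV False by (intro sum.cong) (auto simp: A'_def x'_def)
      finally show ?thesis using eig iV False by (simp add: x'_def)
    qed
  qed
  show ?thesis using S1 S2 S3 S4 by blast
qed

lemma dom_step:
  assumes fin: "finite V" and ne: "V \<noteq> {}" and vV: "v \<notin> V" and A: "in_S V E A"
    and dom: "\<forall>u\<in>V. E v u \<and> E u v"
    and spec: "DSpec V A \<subseteq> complex_of_real ` {-l,0,l,2*l}"
    and lam: "lam = 0 \<or> lam = l" and l0: "l \<noteq> 0"
    and xnz: "\<forall>i\<in>V. x i \<noteq> 0" and eig: "\<forall>i\<in>V. (\<Sum>j\<in>V. A i j * x j) = lam * x i"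
  shows "\<exists>A' x'. in_S (insert v V) E A' \<and> DSpec (insert v V) A' \<subseteq> complex_of_real ` {-l,0,l,2*l}
     \<and> (\<forall>i\<in>insert v V. x' i \<noteq> 0) \<and> (\<forall>i\<in>insert v V. (\<Sum>j\<in>insert v V. A' i j * x' j) = (l - lam) * x' i)"
proof -
  define s0 where "s0 = (\<Sum>j\<in>V. x j * x j)"
  have s0pos: "s0 > 0"
  proof -
    obtain u where u: "u \<in> V" using ne by auto
    have "0 < x u * x u" using xnz u by (metis linorder_neqE_linordered_idom zero_less_mult_iff)
    also have "\<dots> \<le> s0" unfolding s0_def
      using fin u by (intro member_le_sum) auto
    finally show ?thesis .
  qed
  define c where "c = l / sqrt s0"
  have c0: "c \<noteq> 0" using l0 s0pos by (simp add: c_def)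
  define b where "b = (\<lambda>j. c * x j)"
  have bsq: "(\<Sum>j\<in>V. b j * b j) = l * l"
  proof -
    have "(\<Sum>j\<in>V. b j * b j) = c * c * s0"
      by (simp add: b_def s0_def sum_distrib_left mult_ac)
    also have "\<dots> = l * l" using s0pos by (simp add: c_def)
    finally show ?thesis .
  qed
  have beig: "(\<Sum>j\<in>V. A i j * b j) = lam * b i" if "i \<in> V" for i
  proof -
    have "(\<Sum>j\<in>V. A i j * b j) = c * (\<Sum>j\<in>V. A i j * x j)"
      by (simp add: b_def sum_distrib_left mult_ac)
    then show ?thesis using eig that by (simp add: b_def)
  qed
  have bnz: "\<forall>i\<in>V. b i \<noteq> 0" using xnz c0 by (simp add: b_def)
  have symA: "\<forall>i\<in>V. \<forall>j\<in>V. A i j = A j i" using A by (simp add: in_S_def)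
  define A' where "A' = (\<lambda>i j. if i = v then (if j = v then lam else b j) else (if j = v then b i else A i j))"
  define x' where "x' = (\<lambda>i. if i = v then l - 2 * lam else b i)"
  have S1: "in_S (insert v V) E A'"
    using A dom vV bnz unfolding in_S_def A'_def by auto
  have S2: "DSpec (insert v V) A' \<subseteq> complex_of_real ` {-l,0,l,2*l}"
  proof
    fix \<mu> assume "\<mu> \<in> DSpec (insert v V) A'"
    then obtain z where nz: "\<exists>i\<in>insert v V. z i \<noteq> 0"
      and eq: "\<forall>i\<in>insert v V. (\<Sum>j\<in>insert v V. complex_of_real (A' i j) * z j) = \<mu> * z i"
      by (auto simp: DSpec_def is_eigenvalue_def)
    define y where "y = z v"
    define B where "B = (\<Sum>j\<in>V. complex_of_real (b j) * z j)"
    have rowV: "(\<Sum>j\<in>V. complex_of_real (A i j) * z j) + complex_of_real (b i) * y = \<mu> * z i" if "i \<in> V" for i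
    proof -
      have iv: "i \<noteq> v" using that vV by auto
      have "(\<Sum>j\<in>insert v V. complex_of_real (A' i j) * z j) = complex_of_real (b i) * y + (\<Sum>j\<in>V. complex_of_real (A' i j) * z j)"
        using fin vV iv by (simp add: A'_def y_def)
      also have "(\<Sum>j\<in>V. complex_of_real (A' i j) * z j) = (\<Sum>j\<in>V. complex_of_real (A i j) * z j)"
        using vV iv by (intro sum.cong) (auto simp: A'_def)
      finally show ?thesis using eq that by (simp add: add.commute)
    qed
    have rowv: "complex_of_real lam * y + B = \<mu> * y"
    proof -
      have "(\<Sum>j\<in>insert v V. complex_of_real (A' v j) * z j) = complex_of_real lam * y + (\<Sum>j\<in>V. complex_of_real (A' v j) * z j)"
        using fin vV by (simp add: A'_def y_def)
      also have "(\<Sum>j\<in>V. complex_of_real (A' v j) * z j) = B"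
        unfolding B_def using vV by (intro sum.cong) (auto simp: A'_def)
      finally show ?thesis using eq by (simp add: y_def)
    qed
    have key: "(\<Sum>i\<in>V. complex_of_real (b i) * (\<Sum>j\<in>V. complex_of_real (A i j) * z j)) = complex_of_real lam * B"
    proof -
      have "(\<Sum>i\<in>V. complex_of_real (b i) * (\<Sum>j\<in>V. complex_of_real (A i j) * z j))
          = (\<Sum>i\<in>V. \<Sum>j\<in>V. complex_of_real (b i) * complex_of_real (A i j) * z j)"
        by (simp add: sum_distrib_left mult_ac)
      also have "\<dots> = (\<Sum>j\<in>V. \<Sum>i\<in>V. complex_of_real (b i) * complex_of_real (A i j) * z j)"
        by (rule sum.swap)
      also have "\<dots> = (\<Sum>j\<in>V. complex_of_real (\<Sum>i\<in>V. A j i * b i) * z j)"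
      proof (intro sum.cong refl)
        fix j assume j: "j \<in> V"
        have "(\<Sum>i\<in>V. complex_of_real (b i) * complex_of_real (A i j) * z j)
            = (\<Sum>i\<in>V. complex_of_real (A j i * b i)) * z j"
        proof -
          have "(\<Sum>i\<in>V. complex_of_real (b i) * complex_of_real (A i j) * z j)
              = (\<Sum>i\<in>V. complex_of_real (b i) * complex_of_real (A i j)) * z j"
            by (simp add: sum_distrib_right)
          also have "(\<Sum>i\<in>V. complex_of_real (b i) * complex_of_real (A i j)) = (\<Sum>i\<in>V. complex_of_real (A j i * b i))"
            using symA j by (intro sum.cong refl) (simp add: mult_ac)
          finally show ?thesis .
        qed
        then show "(\<Sum>i\<in>V. complex_of_real (b i) * complex_of_real (A i j) * z j) = complex_of_real (\<Sum>i\<in>V. A j i * b i) * z j"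
          by (simp add: of_real_sum)
      qed
      also have "\<dots> = (\<Sum>j\<in>V. complex_of_real lam * (complex_of_real (b j) * z j))"
        by (intro sum.cong refl) (simp add: beig)
      also have "\<dots> = complex_of_real lam * B" by (simp add: B_def sum_distrib_left)
      finally show ?thesis .
    qed
    have sum2: "(\<Sum>i\<in>V. complex_of_real (b i) * ((\<Sum>j\<in>V. complex_of_real (A i j) * z j) + complex_of_real (b i) * y))
        = complex_of_real lam * B + complex_of_real (l * l) * y"
    proof -
      have "(\<Sum>i\<in>V. complex_of_real (b i) * ((\<Sum>j\<in>V. complex_of_real (A i j) * z j) + complex_of_real (b i) * y))
        = (\<Sum>i\<in>V. complex_of_real (b i) * (\<Sum>j\<in>V. complex_of_real (A i j) * z j)) + (\<Sum>i\<in>V. complex_of_real (b i * b i)) * y"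
        by (simp add: distrib_left sum.distrib sum_distrib_right sum_distrib_left mult_ac)
      also have "(\<Sum>i\<in>V. complex_of_real (b i * b i)) = complex_of_real (l * l)"
        using bsq by (simp only: of_real_sum[symmetric])
      finally show ?thesis using key by simp
    qed
    also have "(\<Sum>i\<in>V. complex_of_real (b i) * ((\<Sum>j\<in>V. complex_of_real (A i j) * z j) + complex_of_real (b i) * y))
        = (\<Sum>i\<in>V. complex_of_real (b i) * (\<mu> * z i))"
      by (intro sum.cong refl) (simp add: rowV)
    also have "\<dots> = \<mu> * B" by (simp add: B_def sum_distrib_left mult_ac)
    finally have e1: "complex_of_real lam * B + complex_of_real (l * l) * y = \<mu> * B" by simp
    have Bv: "B = (\<mu> - complex_of_real lam) * y" using rowv by (simp add: algebra_simps)
    have e2: "((\<mu> - complex_of_real lam) * (\<mu> - complex_of_real lam) - complex_of_real (l*l)) * y = 0"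
      using e1 unfolding Bv by (simp add: algebra_simps)
    show "\<mu> \<in> complex_of_real ` {-l,0,l,2*l}"
    proof (cases "y = 0")
      case True
      then have "\<exists>i\<in>V. z i \<noteq> 0" using nz by (auto simp: y_def)
      moreover have "\<forall>i\<in>V. (\<Sum>j\<in>V. complex_of_real (A i j) * z j) = \<mu> * z i" using rowV True by simp
      ultimately have "\<mu> \<in> DSpec V A" by (auto simp: DSpec_def is_eigenvalue_def)
      then show ?thesis using spec by auto
    next
      case False
      then have "(\<mu> - complex_of_real lam) * (\<mu> - complex_of_real lam) = complex_of_real l * complex_of_real l"
        using e2 by simp
      then have "(\<mu> - complex_of_real lam - complex_of_real l) * (\<mu> - complex_of_real lam + complex_of_real l) = 0"
        by (simp add: algebra_simps)
      then have "\<mu> - complex_of_real lam - complex_of_real l = 0 \<or> \<mu> - complex_of_real lam + complex_of_real l = 0"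
        by (simp only: mult_eq_0_iff)
      then have "\<mu> = complex_of_real (lam + l) \<or> \<mu> = complex_of_real (lam - l)"
        by (auto simp: algebra_simps eq_diff_eq)
      then show ?thesis using lam by auto
    qed
  qed
  have S3: "\<forall>i\<in>insert v V. x' i \<noteq> 0"
    using bnz vV lam l0 by (auto simp: x'_def)
  have S4: "\<forall>i\<in>insert v V. (\<Sum>j\<in>insert v V. A' i j * x' j) = (l - lam) * x' i"
  proof
    fix i assume i: "i \<in> insert v V"
    show "(\<Sum>j\<in>insert v V. A' i j * x' j) = (l - lam) * x' i"
    proof (cases "i = v")
      case True
      have "(\<Sum>j\<in>insert v V. A' i j * x' j) = lam * (l - 2*lam) + (\<Sum>j\<in>V. A' i j * x' j)"
        using fin vV True by (simp add: A'_def x'_def)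
      also have "(\<Sum>j\<in>V. A' i j * x' j) = (\<Sum>j\<in>V. b j * b j)"
        using vV True by (intro sum.cong) (auto simp: A'_def x'_def)
      finally show ?thesis using True bsq lam by (auto simp: x'_def algebra_simps)
    next
      case False
      then have iV: "i \<in> V" using i by auto
      have "(\<Sum>j\<in>insert v V. A' i j * x' j) = b i * (l - 2*lam) + (\<Sum>j\<in>V. A' i j * x' j)"
        using fin vV False by (simp add: A'_def x'_def)
      also have "(\<Sum>j\<in>V. A' i j * x' j) = (\<Sum>j\<in>V. A i j * b j)"
        using vV False by (intro sum.cong) (auto simp: A'_def x'_def)
      finally show ?thesis using beig iV False by (simp add: x'_def algebra_simps)
    qed
  qed
  show ?thesis using S1 S2 S3 S4 by blast
qed

lemma main:
  assumes "threshold_graph V E" and l0: "l \<noteq> 0"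
  shows "\<exists>A x lam. in_S V E A \<and> DSpec V A \<subseteq> complex_of_real ` {-l,0,l,2*l} \<and>
     (lam = 0 \<or> lam = l) \<and> finite V \<and> V \<noteq> {} \<and> (\<forall>i\<in>V. x i \<noteq> 0) \<and>
     (\<forall>i\<in>V. (\<Sum>j\<in>V. A i j * x j) = lam * x i)"
  using assms(1)
proof induction
  case (single v E)
  then show ?case using single_step[of v E l] by blast
next
  case (add_isolated V E v)
  then obtain A x lam where h: "in_S V E A" "DSpec V A \<subseteq> complex_of_real ` {-l,0,l,2*l}"
     "lam = 0 \<or> lam = l" "finite V" "V \<noteq> {}" "\<forall>i\<in>V. x i \<noteq> 0"
     "\<forall>i\<in>V. (\<Sum>j\<in>V. A i j * x j) = lam * x i" by blast
  from iso_step[OF h(4) add_isolated(2) h(1) add_isolated(3) h(2) h(3) h(6) h(7)] h(3,4)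
  show ?case by blast
next
  case (add_dominating V E v)
  then obtain A x lam where h: "in_S V E A" "DSpec V A \<subseteq> complex_of_real ` {-l,0,l,2*l}"
     "lam = 0 \<or> lam = l" "finite V" "V \<noteq> {}" "\<forall>i\<in>V. x i \<noteq> 0"
     "\<forall>i\<in>V. (\<Sum>j\<in>V. A i j * x j) = lam * x i" by blast
  have "l - lam = 0 \<or> l - lam = l" using h(3) by auto
  with dom_step[OF h(4) h(5) add_dominating(2) h(1) add_dominating(3) h(2) h(3) l0 h(6) h(7)] h(4)
  show ?case by blast
qed

theorem theorem1:
  fixes V :: "'a set" and E :: "'a \<Rightarrow> 'a \<Rightarrow> bool" and l :: real
  assumes "threshold_graph V E" and "l \<noteq> 0"
  shows "(\<exists>M. in_S V E M \<and> DSpec V M \<subseteq> complex_of_real ` {-l, 0, l, 2*l})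
         \<and> q_min V E \<le> 4"
proof -
  obtain M where M: "in_S V E M" "DSpec V M \<subseteq> complex_of_real ` {-l, 0, l, 2*l}"
    using main[OF assms] by blast
  have c4: "card {-l, 0, l, 2*l} \<le> 4" by (simp add: card_insert_if)
  have "card (DSpec V M) \<le> card (complex_of_real ` {-l, 0, l, 2*l})"
    using M(2) by (intro card_mono) auto
  also have "\<dots> \<le> 4" using card_image_le[of "{-l, 0, l, 2*l}" complex_of_real] c4 by simp
  finally have le: "card (DSpec V M) \<le> 4" .
  have "q_min V E \<le> card (DSpec V M)"
    unfolding q_min_def using M(1) by (intro Least_le) blast
  with le M show ?thesis by auto
qed

end
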